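(* Let $H$ be an abelian group with an alternating $\mathbb{Z}$-bilinear form $\langle-,-\rangle$, let $z\in\ker\mu$, and let $p\ge 2$. Then the composition of the boundary map $\partial_p:C_p(\mathbb{Q}[H])_{(z)}\to C_{p-1}(\mathbb{Q}[H])_{(z)}$ with the quotient projection $C_{p-1}(\mathbb{Q}[H])_{(z)}\to\hat C_{p-1}(\mathbb{Q}[H])_{(z)}$ is the zero map.
   Context: $\mu:H\to\mathrm{Hom}_{\mathbb{Z}}(H,\mathbb{Z})$, $\mu(x)(y)=\langle x,y\rangle$. $\mathbb{Q}[H]$ is the $\mathbb{Q}$-vector space with basis symbols $[x]$, $x\in H$, with Lie bracket $[[x],[y]]=\langle x,y\rangle[x+y]$. Its Chevalley–Eilenberg chain complex is $C_p(\mathbb{Q}[H])=\bigwedge^p_{\mathbb{Q}}\mathbb{Q}[H]$ with $\partial(x_1\wedge\cdots\wedge x_p)=\sum_{i<j}(-1)^{i+j}[x_i,x_j]\wedge x_1\wedge\cdots\widehat{x_i}\cdots\widehat{x_j}\cdots\wedge x_p$. For $p>0$ and $w\in H$, $C_p(\mathbb{Q}[H])_{(w)}$ is the subspace spanned by $[u_1]\wedge\cdots\wedge[u_p]$ with $u_1+\cdots+u_p=w$; these form subcomplexes. Let $\hat I$ be the (two-sided) ideal of the exterior algebra $\bigwedge\mathbb{Q}[H]$ generated by all elements $[u+v]\wedge[x]-[u]\wedge[x+v]-[v]\wedge[x+u]$ with $u,v,x\in H$. Set $\hat I_{p,(w)}=\hat I\cap C_p(\mathbb{Q}[H])_{(w)}$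 and $\hat C_p(\mathbb{Q}[H])_{(w)}=C_p(\mathbb{Q}[H])_{(w)}/\hat I_{p,(w)}$. *)

theory Defs
  imports Complex_Main "HOL-Combinatorics.Permutations"
begin

text \<open>Model of the exterior algebra of the rational vector space Q[H] with basis
 the symbols [x], x in H.  An element is a finitely supported, antisymmetric function
 on lists of elements of H: the value at [u1,...,up] is the coefficient read off
 in degree p (the degree-p part lives on lists of length p).\<close>

definition permute_list :: "'a list \<Rightarrow> (nat \<Rightarrow> nat) \<Rightarrow> 'a list" where
  "permute_list ys \<sigma> = map (\<lambda>i. ys ! \<sigma> i) [0..<length ys]"

definition ext_alg :: "('a list \<Rightarrow> rat) set" where
  "ext_alg = {\<omega>. finite {ys. \<omega> ys \<noteq> 0} \<and>
     (\<forall>ys \<sigma>. \<sigma> permutes {0..<length ys} \<longrightarrow>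
        \<omega> (permute_list ys \<sigma>) = of_int (sign \<sigma>) * \<omega> ys)}"

text \<open>Wedge product (normalised alternation of the tensor product).\<close>
definition wedge :: "('a list \<Rightarrow> rat) \<Rightarrow> ('a list \<Rightarrow> rat) \<Rightarrow> ('a list \<Rightarrow> rat)" where
  "wedge \<omega> \<eta> = (\<lambda>ys. let n = length ys in
     \<Sum>k\<in>{0..n}. \<Sum>\<sigma>\<in>{\<sigma>. \<sigma> permutes {0..<n}}.
       of_int (sign \<sigma>) * \<omega> (take k (permute_list ys \<sigma>)) * \<eta> (drop k (permute_list ys \<sigma>))
       / (fact k * fact (n - k)))"

definition ext_one :: "'a list \<Rightarrow> rat" where
  "ext_one = (\<lambda>ys. if ys = [] then 1 else 0)"

definition gen :: "'a \<Rightarrow> 'a list \<Rightarrow> rat" where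
  "gen x = (\<lambda>ys. if ys = [x] then 1 else 0)"

definition wedge_list :: "'a list \<Rightarrow> 'a list \<Rightarrow> rat" where
  "wedge_list us = foldr (\<lambda>u acc. wedge (gen u) acc) us ext_one"

inductive_set qspan :: "('a list \<Rightarrow> rat) set \<Rightarrow> ('a list \<Rightarrow> rat) set" for S where
  zero: "(\<lambda>_. 0) \<in> qspan S"
| add: "s \<in> S \<Longrightarrow> t \<in> qspan S \<Longrightarrow> (\<lambda>ys. c * s ys + t ys) \<in> qspan S"

definition Cw :: "nat \<Rightarrow> 'a::ab_group_add \<Rightarrow> ('a list \<Rightarrow> rat) set" where
  "Cw p w = qspan {wedge_list us | us. length us = p \<and> sum_list us = w}"

text \<open>Chevalley--Eilenberg boundary, defined on basis wedges and extended linearly.\<close>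
definition remove2 :: "nat \<Rightarrow> nat \<Rightarrow> 'a list \<Rightarrow> 'a list" where
  "remove2 i j us = map (\<lambda>k. us ! k) (filter (\<lambda>k. k \<noteq> i \<and> k \<noteq> j) [0..<length us])"

definition bd_basis :: "('a::ab_group_add \<Rightarrow> 'a \<Rightarrow> int) \<Rightarrow> 'a list \<Rightarrow> 'a list \<Rightarrow> rat" where
  "bd_basis B us = (\<lambda>ys. \<Sum>i<length us. \<Sum>j\<in>{i<..<length us}.
      (-1) ^ (i + j) * of_int (B (us ! i) (us ! j)) *
      wedge (gen (us ! i + us ! j)) (wedge_list (remove2 i j us)) ys)"

text \<open>For \<omega> in degree p, \<omega> = (1/p!) * sum over ys of \<omega>(ys) * wedge_list ys.\<close>
definition boundary :: "('a::ab_group_add \<Rightarrow> 'a \<Rightarrow> int) \<Rightarrow> nat \<Rightarrow> ('a list \<Rightarrow> rat) \<Rightarrow> 'a list \<Rightarrow> rat" where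
  "boundary B p \<omega> = (\<lambda>zs. \<Sum>ys\<in>{ys. length ys = p \<and> \<omega> ys \<noteq> 0}.
      \<omega> ys / fact p * bd_basis B ys zs)"

definition ideal_gens :: "('a::ab_group_add list \<Rightarrow> rat) set" where
  "ideal_gens = {(\<lambda>ys. wedge (gen (u + v)) (gen x) ys - wedge (gen u) (gen (x + v)) ys
                        - wedge (gen v) (gen (x + u)) ys) | u v x. True}"

definition Ihat :: "('a::ab_group_add list \<Rightarrow> rat) set" where
  "Ihat = \<Inter>{J. J \<subseteq> ext_alg \<and> qspan J = J \<and> ideal_gens \<subseteq> J \<and>
              (\<forall>a\<in>ext_alg. \<forall>j\<in>J. wedge a j \<in> J \<and> wedge j a \<in> J)}"

end

theory Submission
  imports Defs
begin


lemma pl_eq: "Defs.permute_list ys \<sigma> = Permutations.permute_list \<sigma> ys"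
  by (simp add: Defs.permute_list_def Permutations.permute_list_def)

lemma length_pl [simp]: "length (Defs.permute_list ys \<sigma>) = length ys"
  by (simp add: Defs.permute_list_def)

lemma nth_pl [simp]: "i < length ys \<Longrightarrow> Defs.permute_list ys \<sigma> ! i = ys ! \<sigma> i"
  by (simp add: Defs.permute_list_def)

lemma pl_compose:
  assumes "\<tau> permutes {0..<length ys}"
  shows "Defs.permute_list ys (\<sigma> \<circ> \<tau>) = Defs.permute_list (Defs.permute_list ys \<sigma>) \<tau>"
  using assms by (simp add: pl_eq permute_list_compose atLeast0LessThan)

definition F :: "'a list \<Rightarrow> 'a list \<Rightarrow> rat" where
  "F us ys = (if length ys = length us then
     (\<Sum>\<sigma>\<in>{\<sigma>. \<sigma> permutes {0..<length ys}}. of_int (sign \<sigma>) * (if Defs.permute_list ys \<sigma> = us then 1 else 0))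
     else 0)"

lemma wedge_gen_Nil: "wedge (gen a) \<psi> [] = 0"
  by (simp add: wedge_def gen_def Defs.permute_list_def)

lemma wedge_gen:
  assumes "ys \<noteq> []"
  shows "wedge (gen a) \<psi> ys =
    (\<Sum>\<sigma>\<in>{\<sigma>. \<sigma> permutes {0..<length ys}}. of_int (sign \<sigma>) * (if ys ! \<sigma> 0 = a then 1 else 0)
        * \<psi> (drop 1 (Defs.permute_list ys \<sigma>))) / fact (length ys - 1)"
proof -
  define n where "n = length ys"
  have n: "n \<ge> 1" using assms by (cases ys) (auto simp: n_def)
  have gk: "gen a (take k (Defs.permute_list ys \<sigma>)) =
      (if k = 1 then (if ys ! \<sigma> 0 = a then 1 else 0) else 0)" if k: "k \<le> n" for k \<sigma>
  proof -
    have "take k (Defs.permute_list ys \<sigma>) = [a] \<longleftrightarrow> k = 1 \<and> ys ! \<sigma> 0 = a"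
    proof -
      obtain x xs where L: "Defs.permute_list ys \<sigma> = x # xs"
        using assms by (cases "Defs.permute_list ys \<sigma>") (auto simp: Defs.permute_list_def)
      have "x = ys ! \<sigma> 0" using L assms by (metis length_greater_0_conv length_pl nth_Cons_0 nth_pl)
      moreover have "length xs = n - 1" using L by (simp add: n_def flip: length_pl[of ys \<sigma>])
      ultimately show ?thesis using L k n by (cases k) auto
    qed
    then show ?thesis by (auto simp: gen_def)
  qed
  have "wedge (gen a) \<psi> ys = (\<Sum>k\<in>{0..n}. if k = 1 then (\<Sum>\<sigma>\<in>{\<sigma>. \<sigma> permutes {0..<n}}.
       of_int (sign \<sigma>) * (if ys ! \<sigma> 0 = a then 1 else 0) * \<psi> (drop 1 (Defs.permute_list ys \<sigma>))
       / (fact 1 * fact (n - 1))) else 0)"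
    unfolding wedge_def Let_def n_def[symmetric]
    by (intro sum.cong refl) (auto simp: gk simp del: One_nat_def)
  also have "\<dots> = (\<Sum>\<sigma>\<in>{\<sigma>. \<sigma> permutes {0..<n}}.
       of_int (sign \<sigma>) * (if ys ! \<sigma> 0 = a then 1 else 0) * \<psi> (drop 1 (Defs.permute_list ys \<sigma>))
       / (fact 1 * fact (n - 1)))"
  proof -
    have "1 \<in> {0..n}" using n by simp
    then show ?thesis by (subst sum.delta) auto
  qed
  also have "\<dots> = (\<Sum>\<sigma>\<in>{\<sigma>. \<sigma> permutes {0..<n}}. of_int (sign \<sigma>) * (if ys ! \<sigma> 0 = a then 1 else 0)
        * \<psi> (drop 1 (Defs.permute_list ys \<sigma>))) / fact (n - 1)"
    by (simp add: sum_divide_distrib)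
  finally show ?thesis by (simp add: n_def)
qed

definition sh :: "(nat \<Rightarrow> nat) \<Rightarrow> nat \<Rightarrow> nat" where
  "sh \<tau> x = (case x of 0 \<Rightarrow> 0 | Suc y \<Rightarrow> Suc (\<tau> y))"

lemma sh_permutes_sign:
  assumes "\<tau> permutes {0..<m}"
  shows "sh \<tau> permutes {0..<Suc m}" "sign (sh \<tau>) = sign \<tau>"
proof -
  have eq: "sh \<tau> = (\<lambda>x. if x \<in> {1..<Suc m} then Suc (\<tau> (x - 1)) else x)"
  proof
    fix x show "sh \<tau> x = (if x \<in> {1..<Suc m} then Suc (\<tau> (x - 1)) else x)"
      using permutes_not_in[OF assms] by (cases x) (auto simp: sh_def)
  qed
  interpret permutes_bij_finite \<tau> "{0..<m}" "{1..<Suc m}" Suc "\<lambda>x. x - 1" "sh \<tau>"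
    by unfold_locales (auto simp: assms bij_betw_def image_Suc_atLeastLessThan eq)
  show "sh \<tau> permutes {0..<Suc m}"
    using permutes_p' by (auto intro: permutes_subset)
  show "sign (sh \<tau>) = sign \<tau>" using sign_p' by simp
qed

lemma pl_sh:
  assumes "length ys = Suc m" "\<tau> permutes {0..<m}"
  shows "Defs.permute_list ys (\<sigma> \<circ> sh \<tau>) = ys ! \<sigma> 0 # Defs.permute_list (drop 1 (Defs.permute_list ys \<sigma>)) \<tau>"
proof (rule nth_equalityI)
  show "length (Defs.permute_list ys (\<sigma> \<circ> sh \<tau>)) = length (ys ! \<sigma> 0 # Defs.permute_list (drop 1 (Defs.permute_list ys \<sigma>)) \<tau>)"
    using assms by simp
  fix i assume i: "i < length (Defs.permute_list ys (\<sigma> \<circ> sh \<tau>))"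
  show "Defs.permute_list ys (\<sigma> \<circ> sh \<tau>) ! i = (ys ! \<sigma> 0 # Defs.permute_list (drop 1 (Defs.permute_list ys \<sigma>)) \<tau>) ! i"
  proof (cases i)
    case 0 then show ?thesis using i by (simp add: sh_def)
  next
    case (Suc k)
    have k: "k < m" using i Suc assms by simp
    have "\<tau> k < m" using permutes_in_image[OF assms(2)] k by simp
    then show ?thesis using Suc k assms by (simp add: sh_def)
  qed
qed

lemma wl_F: "wedge_list us = F us"
proof (induction us)
  case Nil
  show ?case
  proof
    fix ys :: "'a list"
    show "wedge_list [] ys = F [] ys"
    proof (cases "ys = []")
      case True
      have "{\<sigma>. \<sigma> permutes {0..<0::nat}} = {id}" by auto
      then show ?thesis using True by (simp add: wedge_list_def ext_one_def F_def Defs.permute_list_def)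
    qed (simp add: wedge_list_def ext_one_def F_def)
  qed
next
  case (Cons a us)
  show ?case
  proof
    fix ys :: "'a list"
    have wl: "wedge_list (a # us) = wedge (gen a) (F us)"
      using Cons by (simp add: wedge_list_def)
    show "wedge_list (a # us) ys = F (a # us) ys"
    proof (cases "ys = []")
      case True then show ?thesis by (simp add: wl wedge_gen_Nil F_def)
    next
      case False
      then obtain m where m: "length ys = Suc m" by (cases ys) auto
      show ?thesis
      proof (cases "m = length us")
        case False
        then show ?thesis using m \<open>ys \<noteq> []\<close> by (simp add: wl wedge_gen F_def)
      next
        case True
        define P where "P n = {\<sigma>::nat\<Rightarrow>nat. \<sigma> permutes {0..<n}}" for n
        define g where "g \<pi> = of_int (sign \<pi>) * (if Defs.permute_list ys \<pi> = a # us then 1 else 0 :: rat)" for \<pi>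
        have fin: "finite (P n)" for n by (simp add: P_def finite_permutations)
        have step: "of_int (sign \<sigma>) * (if ys ! \<sigma> 0 = a then 1 else 0) * F us (drop 1 (Defs.permute_list ys \<sigma>))
            = (\<Sum>\<tau>\<in>P m. g (\<sigma> \<circ> sh \<tau>))" if s: "\<sigma> \<in> P (Suc m)" for \<sigma>
        proof -
          have "of_int (sign \<sigma>) * (if ys ! \<sigma> 0 = a then 1 else 0) * F us (drop 1 (Defs.permute_list ys \<sigma>))
             = (\<Sum>\<tau>\<in>P m. of_int (sign \<sigma>) * (if ys ! \<sigma> 0 = a then 1 else 0) *
                  (of_int (sign \<tau>) * (if Defs.permute_list (drop 1 (Defs.permute_list ys \<sigma>)) \<tau> = us then 1 else 0)))"
            using True m by (simp add: F_def P_def sum_distrib_left)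
          also have "\<dots> = (\<Sum>\<tau>\<in>P m. g (\<sigma> \<circ> sh \<tau>))"
          proof (intro sum.cong refl)
            fix \<tau> assume t: "\<tau> \<in> P m"
            have tp: "\<tau> permutes {0..<m}" using t by (simp add: P_def)
            have sp: "\<sigma> permutes {0..<Suc m}" using s by (simp add: P_def)
            have True ..
            moreover have "permutation \<sigma>" "permutation (sh \<tau>)"
              using sh_permutes_sign[OF tp] sp by (auto intro: permutes_imp_permutation)
            ultimately have "sign (\<sigma> \<circ> sh \<tau>) = sign \<sigma> * sign \<tau>"
              using sh_permutes_sign[OF tp] by (simp add: sign_compose)
            then show "of_int (sign \<sigma>) * (if ys ! \<sigma> 0 = a then 1 else 0) *
                  (of_int (sign \<tau>) * (if Defs.permute_list (drop 1 (Defs.permute_list ys \<sigma>)) \<tau> = us then 1 else 0))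
                = g (\<sigma> \<circ> sh \<tau>)"
              by (simp add: g_def pl_sh[OF m tp])
          qed
          finally show ?thesis .
        qed
        have "wedge_list (a # us) ys = (\<Sum>\<sigma>\<in>P (Suc m). of_int (sign \<sigma>) * (if ys ! \<sigma> 0 = a then 1 else 0) * F us (drop 1 (Defs.permute_list ys \<sigma>))) / fact m"
          unfolding wl wedge_gen[OF \<open>ys \<noteq> []\<close>] m P_def by simp
        also have "\<dots> = (\<Sum>\<sigma>\<in>P (Suc m). \<Sum>\<tau>\<in>P m. g (\<sigma> \<circ> sh \<tau>)) / fact m"
          using step by (intro arg_cong[where f="\<lambda>x. x / fact m"] sum.cong) auto
        also have "\<dots> = (\<Sum>\<tau>\<in>P m. \<Sum>\<sigma>\<in>P (Suc m). g (\<sigma> \<circ> sh \<tau>)) / fact m"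
          by (subst sum.swap) simp
        also have "\<dots> = (\<Sum>\<tau>\<in>P m. \<Sum>\<pi>\<in>P (Suc m). g \<pi>) / fact m"
        proof -
          have "(\<Sum>\<sigma>\<in>P (Suc m). g (\<sigma> \<circ> sh \<tau>)) = (\<Sum>\<pi>\<in>P (Suc m). g \<pi>)" if "\<tau> \<in> P m" for \<tau>
            using sh_permutes_sign(1)[of \<tau> m] that unfolding P_def
            by (subst sum_permutations_compose_right[of "sh \<tau>"]) auto
          then show ?thesis by simp
        qed
        also have "\<dots> = (\<Sum>\<pi>\<in>P (Suc m). g \<pi>)"
          by (simp add: P_def card_permutations)
        also have "\<dots> = F (a # us) ys"
          using True m by (simp add: F_def P_def g_def)
        finally show ?thesis .
      qed
    qed
  qed
qed



lemma wedge_lin2: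
  "wedge \<omega> (\<lambda>x. c * f x + d * g x) ys = c * wedge \<omega> f ys + d * wedge \<omega> g ys"
proof -
  have e: "A * (c * x + d * y) / D = c * (A * x / D) + d * (A * y / D)" for A x y D :: rat
    by (simp add: algebra_simps add_divide_distrib)
  show ?thesis
    unfolding wedge_def Let_def
    by (simp only: e sum.distrib sum_distrib_left)
qed

lemma wedge_scale2: "wedge \<omega> (\<lambda>x. c * f x) ys = c * wedge \<omega> f ys"
  using wedge_lin2[of \<omega> c f 0 f ys] by simp

lemma wedge_diff2: "wedge \<omega> (\<lambda>x. f x - g x) ys = wedge \<omega> f ys - wedge \<omega> g ys"
  using wedge_lin2[of \<omega> 1 f "-1" g ys] by simp

lemma wl_Cons: "wedge_list (a # us) = wedge (gen a) (wedge_list us)"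
  by (simp add: wedge_list_def)

lemma pl_swap01:
  assumes "length L \<ge> 2"
  shows "Defs.permute_list L (Transposition.transpose 0 1) = L ! 1 # L ! 0 # drop 2 L"
proof (rule nth_equalityI)
  show "length (Defs.permute_list L (Transposition.transpose 0 1)) = length (L ! 1 # L ! 0 # drop 2 L)"
    using assms by simp
  fix i assume "i < length (Defs.permute_list L (Transposition.transpose 0 1))"
  then show "Defs.permute_list L (Transposition.transpose 0 1) ! i = (L ! 1 # L ! 0 # drop 2 L) ! i"
  proof -
    consider "i = 0" | "i = 1" | "i \<ge> 2" by linarith
    then show ?thesis
    proof cases
      case 3
      then obtain k where k: "i = Suc (Suc k)" by (metis add_2_eq_Suc le_Suc_ex)
      have "Transposition.transpose 0 1 i = i" using 3 by (simp add: transpose_def)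
      then show ?thesis using \<open>i < _\<close> assms k by simp
    qed (use \<open>i < _\<close> assms in auto)
  qed
qed

lemma F_swap: "F (a # b # R) ys = - F (b # a # R) ys"
proof (cases "length ys = length R + 2")
  case False then show ?thesis by (simp add: F_def)
next
  case True
  define t where "t = Transposition.transpose (0::nat) 1"
  have tp: "t permutes {0..<length ys}" using True unfolding t_def by (intro permutes_swap_id) auto
  have "F (a # b # R) ys = (\<Sum>\<sigma>\<in>{\<sigma>. \<sigma> permutes {0..<length ys}}.
      of_int (sign (\<sigma> \<circ> t)) * (if Defs.permute_list ys (\<sigma> \<circ> t) = a # b # R then 1 else 0))"
  proof -
    have "F (a # b # R) ys = (\<Sum>\<sigma>\<in>{\<sigma>. \<sigma> permutes {0..<length ys}}.
      of_int (sign \<sigma>) * (if Defs.permute_list ys \<sigma> = a # b # R then 1 else 0))"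
      using True by (simp add: F_def)
    also have "\<dots> = (\<Sum>\<sigma>\<in>{\<sigma>. \<sigma> permutes {0..<length ys}}.
      of_int (sign (\<sigma> \<circ> t)) * (if Defs.permute_list ys (\<sigma> \<circ> t) = a # b # R then 1 else 0))"
      by (rule sum_permutations_compose_right[OF tp])
    finally show ?thesis .
  qed
  also have "\<dots> = (\<Sum>\<sigma>\<in>{\<sigma>. \<sigma> permutes {0..<length ys}}.
      - (of_int (sign \<sigma>) * (if Defs.permute_list ys \<sigma> = b # a # R then 1 else 0)))"
  proof (intro sum.cong refl)
    fix \<sigma> assume "\<sigma> \<in> {\<sigma>. \<sigma> permutes {0..<length ys}}"
    then have sp: "\<sigma> permutes {0..<length ys}" by simp
    have "sign (\<sigma> \<circ> t) = - sign \<sigma>"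
      using sign_compose[OF permutes_imp_permutation[OF _ sp] permutes_imp_permutation[OF _ tp]]
      by (simp add: t_def sign_swap_id)
    moreover have "Defs.permute_list ys (\<sigma> \<circ> t) = a # b # R \<longleftrightarrow> Defs.permute_list ys \<sigma> = b # a # R"
    proof -
      define L where "L = Defs.permute_list ys \<sigma>"
      have lL: "length L = length R + 2" using True by (simp add: L_def)
      then obtain x y R' where L: "L = x # y # R'" by (metis Suc_length_conv add_2_eq_Suc')
      have "Defs.permute_list ys (\<sigma> \<circ> t) = Defs.permute_list L t"
        using pl_compose[OF tp] by (simp add: L_def)
      also have "\<dots> = L ! 1 # L ! 0 # drop 2 L" using pl_swap01[of L] lL by (simp add: t_def)
      also have "\<dots> = y # x # R'" using L by simp
      finally have "Defs.permute_list ys (\<sigma> \<circ> t) = y # x # R'" .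
      then show ?thesis using L by (auto simp: L_def)
    qed
    ultimately show "of_int (sign (\<sigma> \<circ> t)) * (if Defs.permute_list ys (\<sigma> \<circ> t) = a # b # R then 1 else 0)
        = - (of_int (sign \<sigma>) * (if Defs.permute_list ys \<sigma> = b # a # R then 1 else 0 :: rat))"
      by simp
  qed
  also have "\<dots> = - F (b # a # R) ys" using True by (simp add: F_def sum_negf)
  finally show ?thesis .
qed

lemma wl_swap: "wedge_list (a # b # R) ys = - wedge_list (b # a # R) ys"
  unfolding wl_F by (rule F_swap)

definition del :: "nat \<Rightarrow> 'a list \<Rightarrow> 'a list" where
  "del k M = take k M @ drop (Suc k) M"

lemma wl_mtf:
  "k < length M \<Longrightarrow> wedge_list M ys = (-1) ^ k * wedge_list (M ! k # del k M) ys"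
proof (induction k arbitrary: M ys)
  case 0
  then obtain m M' where "M = m # M'" by (cases M) auto
  then show ?case by (simp add: del_def)
next
  case (Suc k)
  then obtain m M' where M: "M = m # M'" by (cases M) auto
  have k: "k < length M'" using Suc M by simp
  have "wedge_list M ys = wedge (gen m) (\<lambda>zs. (-1) ^ k * wedge_list (M' ! k # del k M') zs) ys"
  proof -
    have "wedge_list M' = (\<lambda>zs. (-1) ^ k * wedge_list (M' ! k # del k M') zs)"
      by (intro ext Suc.IH[OF k])
    then show ?thesis by (simp add: M wl_Cons)
  qed
  also have "\<dots> = (-1) ^ k * wedge_list (m # M' ! k # del k M') ys"
    by (simp add: wedge_scale2 wl_Cons)
  also have "\<dots> = (-1) ^ Suc k * wedge_list (M' ! k # m # del k M') ys"
    by (subst wl_swap) simp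
  also have "M' ! k # m # del k M' = M ! Suc k # del (Suc k) M"
    by (simp add: M del_def)
  finally show ?case .
qed

lemma gen_wl: "gen x = wedge_list [x]"
proof
  fix ys :: "'a list"
  have "wedge_list [x] ys = F [x] ys" by (simp add: wl_F)
  also have "\<dots> = gen x ys"
  proof (cases "length ys = 1")
    case True
    then obtain y where ys: "ys = [y]" by (cases ys) auto
    have "{\<sigma>. \<sigma> permutes {0..<Suc 0}} = {id}"
      by (auto simp: permutes_sing[of _ 0, simplified])
    then show ?thesis by (simp add: F_def ys gen_def Defs.permute_list_def)
  qed (auto simp: F_def gen_def)
  finally show "gen x ys = wedge_list [x] ys" ..
qed



lemma qspan_gen: "s \<in> S \<Longrightarrow> s \<in> qspan S"
  using qspan.add[of s S "\<lambda>_. 0" 1] qspan.zero[of S] by simp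

lemma qspan_add: "f \<in> qspan S \<Longrightarrow> g \<in> qspan S \<Longrightarrow> (\<lambda>x. f x + g x) \<in> qspan S"
proof (induction f rule: qspan.induct)
  case zero then show ?case by simp
next
  case (add s t c)
  have "(\<lambda>x. c * s x + t x + g x) = (\<lambda>x. c * s x + (t x + g x))" by (simp add: add.assoc)
  then show ?case using add by (simp add: qspan.add)
qed

lemma qspan_scale: "f \<in> qspan S \<Longrightarrow> (\<lambda>x. c * f x) \<in> qspan S"
proof (induction f rule: qspan.induct)
  case zero then show ?case using qspan.zero by simp
next
  case (add s t d)
  have "(\<lambda>x. c * (d * s x + t x)) = (\<lambda>x. (c * d) * s x + c * t x)" by (simp add: algebra_simps)
  then show ?case using add by (simp add: qspan.add)
qed

lemma qspan_sum: "(\<And>i. i \<in> I \<Longrightarrow> f i \<in> qspan S) \<Longrightarrow> (\<lambda>x. \<Sum>i\<in>I. f i x) \<in> qspan S"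
proof (cases "finite I")
  case True
  assume h: "\<And>i. i \<in> I \<Longrightarrow> f i \<in> qspan S"
  from True h show ?thesis
  proof (induction I rule: finite_induct)
    case empty then show ?case using qspan.zero by simp
  next
    case (insert i I)
    then show ?case using qspan_add[of "f i" S "\<lambda>x. \<Sum>i\<in>I. f i x"] by simp
  qed
qed (simp add: qspan.zero)

lemma qspan_supp: "\<omega> \<in> qspan S \<Longrightarrow> \<omega> ys \<noteq> 0 \<Longrightarrow> \<exists>s\<in>S. s ys \<noteq> 0"
  by (induction \<omega> rule: qspan.induct) (auto, metis add.right_neutral mult_zero_right)

definition sel :: "(nat \<Rightarrow> bool) \<Rightarrow> 'a list \<Rightarrow> 'a list" where
  "sel P ys = map ((!) ys) (filter P [0..<length ys])"

lemma remove2_sel: "remove2 i j us = sel (\<lambda>k. k \<noteq> i \<and> k \<noteq> j) us"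
  by (simp add: remove2_def sel_def)

lemma upt_split3: assumes "j < n" shows "[0..<n] = [0..<j] @ j # [Suc j..<n]"
proof -
  have "[0..<n] = [0..<j] @ [j..<n]" using upt_add_eq_append[of 0 j "n - j"] assms by simp
  then show ?thesis using assms by (simp add: upt_conv_Cons)
qed

lemma sel_move:
  assumes "P j" "j < length ys"
  shows "wedge_list (c # sel P ys) zs =
    (-1) ^ card {k. k < j \<and> P k} * wedge_list (c # ys ! j # sel (\<lambda>k. P k \<and> k \<noteq> j) ys) zs"
proof -
  define F1 where "F1 = filter P [0..<j]"
  define F2 where "F2 = filter P [Suc j..<length ys]"
  have s1: "filter P [0..<length ys] = F1 @ j # F2"
    using assms upt_split3[OF assms(2)] by (simp add: F1_def F2_def)
  have s2: "filter (\<lambda>k. P k \<and> k \<noteq> j) [0..<length ys] = F1 @ F2"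
  proof -
    have "filter (\<lambda>k. P k \<and> k \<noteq> j) [0..<j] = F1" unfolding F1_def by (intro filter_cong) auto
    moreover have "filter (\<lambda>k. P k \<and> k \<noteq> j) [Suc j..<length ys] = F2" unfolding F2_def by (intro filter_cong) auto
    ultimately show ?thesis using upt_split3[OF assms(2)] by simp
  qed
  define M where "M = sel P ys"
  have M: "M = map ((!) ys) F1 @ ys ! j # map ((!) ys) F2" by (simp add: M_def sel_def s1)
  define k where "k = length F1"
  have kc: "k = card {k. k < j \<and> P k}"
    unfolding k_def F1_def length_filter_conv_card by (intro arg_cong[where f=card]) auto
  have Mk: "M ! k = ys ! j" "del k M = sel (\<lambda>k. P k \<and> k \<noteq> j) ys" "k < length M"
    by (simp_all add: M k_def del_def sel_def s2 nth_append)
  have "wedge_list M = (\<lambda>zs. (-1) ^ k * wedge_list (M ! k # del k M) zs)"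
    by (intro ext wl_mtf Mk)
  then have "wedge_list (c # M) zs = (-1) ^ k * wedge_list (c # M ! k # del k M) zs"
    by (simp add: wl_Cons wedge_scale2)
  then show ?thesis using Mk kc by (simp add: M_def)
qed

lemma sum_list_sel:
  "sum_list (sel P ys) = (\<Sum>k\<in>{k. k < length ys \<and> P k}. ys ! k)"
proof -
  have "sum_list (sel P ys) = sum ((!) ys) (set (filter P [0..<length ys]))"
    unfolding sel_def by (rule sum_list_distinct_conv_sum_set) simp
  also have "set (filter P [0..<length ys]) = {k. k < length ys \<and> P k}" by auto
  finally show ?thesis .
qed

lemma length_sel: "length (sel P ys) = card {k. k < length ys \<and> P k}"
  unfolding sel_def length_map length_filter_conv_card
  by (intro arg_cong[where f=card]) auto

lemma remove2_facts:
  fixes ys :: "'a::ab_group_add list"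
  assumes "i < j" "j < length ys"
  shows "length (remove2 i j ys) = length ys - 2"
    "sum_list (remove2 i j ys) = sum_list ys - ys ! i - ys ! j"
proof -
  have e: "{k. k < length ys \<and> k \<noteq> i \<and> k \<noteq> j} = {..<length ys} - {i} - {j}" by auto
  show "length (remove2 i j ys) = length ys - 2"
    unfolding remove2_sel length_sel e using assms by (simp add: card_Diff_singleton_if)
  have "sum_list ys = (\<Sum>k<length ys. ys ! k)"
    by (simp add: sum_list_sum_nth atLeast0LessThan)
  also have "\<dots> = ys ! i + (\<Sum>k\<in>{..<length ys} - {i}. ys ! k)"
    using assms by (subst sum.remove[of _ i]) auto
  also have "(\<Sum>k\<in>{..<length ys} - {i}. ys ! k) = ys ! j + (\<Sum>k\<in>{..<length ys} - {i} - {j}. ys ! k)"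
    using assms by (subst sum.remove[of _ j]) auto
  finally show "sum_list (remove2 i j ys) = sum_list ys - ys ! i - ys ! j"
    unfolding remove2_sel sum_list_sel e by (simp add: algebra_simps)
qed



lemma gen_ext: "gen r \<in> ext_alg"
proof -
  have "{ys. gen r ys \<noteq> 0} = {[r]}" by (auto simp: gen_def)
  moreover have "gen r (Defs.permute_list ys \<sigma>) = of_int (sign \<sigma>) * gen r ys"
    if "\<sigma> permutes {0..<length ys}" for ys \<sigma>
  proof (cases "length ys = 1")
    case True
    then have "\<sigma> = id" using that by (simp add: permutes_sing[of _ 0, simplified])
    then show ?thesis by (simp add: Defs.permute_list_def map_nth)
  next
    case False
    then have "Defs.permute_list ys \<sigma> \<noteq> [r]" "ys \<noteq> [r]"
      by (metis length_pl length_Cons list.size(3) One_nat_def)+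
    then show ?thesis by (simp add: gen_def)
  qed
  ultimately show ?thesis by (simp add: ext_alg_def)
qed

definition Jprop :: "('a::ab_group_add list \<Rightarrow> rat) set \<Rightarrow> bool" where
  "Jprop J \<longleftrightarrow> J \<subseteq> ext_alg \<and> qspan J = J \<and> ideal_gens \<subseteq> J \<and>
              (\<forall>a\<in>ext_alg. \<forall>j\<in>J. wedge a j \<in> J \<and> wedge j a \<in> J)"

lemma wl2: "wedge_list [a, b] = wedge (gen a) (gen b)"
  by (simp only: wl_Cons[of a "[b]"] gen_wl[of b])

lemma rel_J_app:
  assumes J: "Jprop J"
  shows "(\<lambda>ys. wedge_list (R @ [u + v, x]) ys - wedge_list (R @ [u, x + v]) ys
     - wedge_list (R @ [v, x + u]) ys) \<in> J"
proof (induction R)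
  case Nil
  have "(\<lambda>ys. wedge (gen (u + v)) (gen x) ys - wedge (gen u) (gen (x + v)) ys
          - wedge (gen v) (gen (x + u)) ys) \<in> J"
  proof -
    have "(\<lambda>ys. wedge (gen (u + v)) (gen x) ys - wedge (gen u) (gen (x + v)) ys
          - wedge (gen v) (gen (x + u)) ys) \<in> ideal_gens"
      unfolding ideal_gens_def by blast
    moreover have "ideal_gens \<subseteq> J" using J by (simp add: Jprop_def)
    ultimately show ?thesis by blast
  qed
  then show ?case by (simp add: wl2)
next
  case (Cons r R)
  have "wedge (gen r) (\<lambda>ys. wedge_list (R @ [u + v, x]) ys - wedge_list (R @ [u, x + v]) ys
     - wedge_list (R @ [v, x + u]) ys) \<in> J"
  proof -
    have cl: "\<And>a j. a \<in> ext_alg \<Longrightarrow> j \<in> J \<Longrightarrow> wedge a j \<in> J"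
      using J unfolding Jprop_def by blast
    show ?thesis by (rule cl[OF gen_ext Cons.IH])
  qed
  moreover have "wedge (gen r) (\<lambda>ys. wedge_list (R @ [u + v, x]) ys - wedge_list (R @ [u, x + v]) ys
     - wedge_list (R @ [v, x + u]) ys) = (\<lambda>ys. wedge_list ((r # R) @ [u + v, x]) ys - wedge_list ((r # R) @ [u, x + v]) ys
     - wedge_list ((r # R) @ [v, x + u]) ys)"
    by (rule ext) (simp add: wedge_diff2 wl_Cons)
  ultimately show ?case by simp
qed

lemma wl_pair_front: "wedge_list (R @ [a, b]) ys = wedge_list (a # b # R) ys"
proof -
  have d1: "del (Suc (length R)) (R @ [a, b]) = R @ [a]" by (simp add: del_def)
  have d2: "del (length R) (R @ [a]) = R" by (simp add: del_def)
  have "wedge_list (R @ [a, b]) ys = (-1) ^ Suc (length R) * wedge_list (b # R @ [a]) ys"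
    using wl_mtf[of "Suc (length R)" "R @ [a, b]" ys] d1 by (simp add: nth_append)
  moreover have "wedge_list (R @ [a]) = (\<lambda>ys. (-1) ^ length R * wedge_list (a # R) ys)"
    using wl_mtf[of "length R" "R @ [a]"] d2 by (intro ext) (simp add: nth_append)
  then have "wedge_list (b # R @ [a]) ys = (-1) ^ length R * wedge_list (b # a # R) ys"
    by (simp add: wl_Cons wedge_scale2)
  moreover have "wedge_list (b # a # R) ys = - wedge_list (a # b # R) ys"
    by (rule wl_swap)
  ultimately have "wedge_list (R @ [a, b]) ys = (-1) ^ Suc (length R) * ((-1) ^ length R * (- wedge_list (a # b # R) ys))"
    by simp
  also have "\<dots> = ((-1) ^ Suc (length R) * (-1) ^ length R) * (- wedge_list (a # b # R) ys)"
    by (simp only: mult.assoc)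
  also have "(-1::rat) ^ Suc (length R) * (-1) ^ length R = -1"
    by (induct R) auto
  also have "(-1) * (- wedge_list (a # b # R) ys) = wedge_list (a # b # R) ys" by simp
  finally show ?thesis .
qed

lemma rel_J:
  assumes J: "Jprop J"
  shows "(\<lambda>ys. wedge_list ((u + v) # x # R) ys - wedge_list (u # (x + v) # R) ys
     - wedge_list (v # (x + u) # R) ys) \<in> J"
  using rel_J_app[OF J, of R u v x] by (simp only: wl_pair_front)



lemma AS:
  fixes a W :: "nat \<Rightarrow> nat \<Rightarrow> rat"
  assumes anti: "\<And>i j. a i j = - a j i" and row: "\<And>m. m < n \<Longrightarrow> (\<Sum>k<n. a m k) = 0"
  shows "(\<Sum>i<n. \<Sum>j\<in>{i<..<n}. (-1) ^ (i + j) * a i j * W i j) =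
    (\<Sum>i<n. \<Sum>j\<in>{i<..<n}. if i = 0 then 0 else
        a i j * ((-1) ^ i * W 0 i - (-1) ^ j * W 0 j + (-1) ^ (i + j) * W i j))"
proof (cases "n = 0")
  case True then show ?thesis by simp
next
  case False
  define S where "S = {1..<n}"
  have S: "{..<n} = insert 0 S" "0 \<notin> S" "finite S" "{0<..<n} = S"
    using False by (auto simp: S_def)
  have a0: "a i i = 0" for i using anti[of i i] by simp
  have flt: "(\<Sum>j\<in>{i<..<n}. f j) = (\<Sum>j\<in>S. if i < j then f j else 0)" if "i \<in> S" for i and f :: "nat \<Rightarrow> rat"
  proof -
    have "{j \<in> S. i < j} = {i<..<n}" using that by (auto simp: S_def)
    then show ?thesis by (simp add: sum.inter_filter[OF S(3), symmetric])
  qed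
  have inner: "(\<Sum>j\<in>S. (if i < j then a i j else 0) - (if j < i then a j i else 0)) = a 0 i"
    if i: "i \<in> S" for i
  proof -
    have "(\<Sum>j\<in>S. (if i < j then a i j else 0) - (if j < i then a j i else 0)) = (\<Sum>j\<in>S. a i j)"
    proof (intro sum.cong refl)
      fix j show "(if i < j then a i j else 0) - (if j < i then a j i else 0) = a i j"
        using anti[of j i] a0[of i] by (cases "i < j"; cases "j < i") auto
    qed
    also have "\<dots> = - a i 0"
    proof -
      have "i < n" using i by (simp add: S_def)
      then have "(\<Sum>k<n. a i k) = 0" by (rule row)
      then show ?thesis using S by simp
    qed
    also have "\<dots> = a 0 i" using anti[of i 0] by simp
    finally show ?thesis .
  qed
  have star: "(\<Sum>j\<in>S. (-1) ^ j * a 0 j * W 0 j) =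
     (\<Sum>i\<in>S. \<Sum>j\<in>{i<..<n}. a i j * ((-1) ^ i * W 0 i - (-1) ^ j * W 0 j))"
  proof -
    have "(\<Sum>i\<in>S. \<Sum>j\<in>{i<..<n}. a i j * ((-1) ^ i * W 0 i - (-1) ^ j * W 0 j)) =
       (\<Sum>i\<in>S. \<Sum>j\<in>S. if i < j then a i j * ((-1) ^ i * W 0 i - (-1) ^ j * W 0 j) else 0)"
      by (intro sum.cong refl flt)
    also have "\<dots> = (\<Sum>i\<in>S. \<Sum>j\<in>S. if i < j then a i j * (-1) ^ i * W 0 i else 0)
        - (\<Sum>i\<in>S. \<Sum>j\<in>S. if i < j then a i j * (-1) ^ j * W 0 j else 0)"
      by (simp add: sum_subtractf[symmetric] algebra_simps if_distrib cong: if_cong)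
    also have "(\<Sum>i\<in>S. \<Sum>j\<in>S. if i < j then a i j * (-1) ^ j * W 0 j else 0)
        = (\<Sum>i\<in>S. \<Sum>j\<in>S. if j < i then a j i * (-1) ^ i * W 0 i else 0)"
      by (rule sum.swap)
    also have "(\<Sum>i\<in>S. \<Sum>j\<in>S. if i < j then a i j * (-1) ^ i * W 0 i else 0)
        - (\<Sum>i\<in>S. \<Sum>j\<in>S. if j < i then a j i * (-1) ^ i * W 0 i else 0)
        = (\<Sum>i\<in>S. (-1) ^ i * W 0 i * (\<Sum>j\<in>S. (if i < j then a i j else 0) - (if j < i then a j i else 0)))"
      unfolding sum_subtractf[symmetric] sum_distrib_left
      by (intro sum.cong refl) (auto simp: algebra_simps)
    also have "\<dots> = (\<Sum>i\<in>S. (-1) ^ i * W 0 i * a 0 i)"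
      by (intro sum.cong refl) (simp add: inner)
    finally show ?thesis by (simp add: algebra_simps)
  qed
  have "(\<Sum>i<n. \<Sum>j\<in>{i<..<n}. (-1) ^ (i + j) * a i j * W i j) =
      (\<Sum>j\<in>S. (-1) ^ j * a 0 j * W 0 j) + (\<Sum>i\<in>S. \<Sum>j\<in>{i<..<n}. (-1) ^ (i + j) * a i j * W i j)"
    using S by simp
  also have "\<dots> = (\<Sum>i\<in>S. \<Sum>j\<in>{i<..<n}. a i j * ((-1) ^ i * W 0 i - (-1) ^ j * W 0 j))
      + (\<Sum>i\<in>S. \<Sum>j\<in>{i<..<n}. (-1) ^ (i + j) * a i j * W i j)"
    by (simp only: star)
  also have "\<dots> = (\<Sum>i\<in>S. \<Sum>j\<in>{i<..<n}.
        a i j * ((-1) ^ i * W 0 i - (-1) ^ j * W 0 j + (-1) ^ (i + j) * W i j))"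
    by (simp add: sum.distrib[symmetric] algebra_simps)
  also have "\<dots> = (\<Sum>i<n. \<Sum>j\<in>{i<..<n}. if i = 0 then 0 else
        a i j * ((-1) ^ i * W 0 i - (-1) ^ j * W 0 j + (-1) ^ (i + j) * W i j))"
    using S by (simp, intro sum.cong refl) auto
  finally show ?thesis .
qed



lemma card_aux:
  assumes "0 < i" "i < j"
  shows "card {k. k < j \<and> (k \<noteq> 0 \<and> k \<noteq> i)} = j - 2"
    "card {k. k < i \<and> (k \<noteq> 0 \<and> k \<noteq> j)} = i - 1"
    "card {k. k < (0::nat) \<and> P k} = 0"
proof -
  have "{k. k < j \<and> (k \<noteq> 0 \<and> k \<noteq> i)} = {1..<j} - {i}" by auto
  then show "card {k. k < j \<and> (k \<noteq> 0 \<and> k \<noteq> i)} = j - 2" using assms by simp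
  have "{k. k < i \<and> (k \<noteq> 0 \<and> k \<noteq> j)} = {1..<i}" using assms by auto
  then show "card {k. k < i \<and> (k \<noteq> 0 \<and> k \<noteq> j)} = i - 1" by simp
qed simp

lemma E_identity:
  fixes ys zs :: "'a::ab_group_add list"
  assumes ij: "0 < i" "i < j" "j < length ys"
  defines "W \<equiv> \<lambda>i j. wedge_list ((ys ! i + ys ! j) # remove2 i j ys) zs"
  defines "Rr \<equiv> sel (\<lambda>k. k \<noteq> 0 \<and> k \<noteq> i \<and> k \<noteq> j) ys"
  shows "(-1) ^ i * W 0 i - (-1) ^ j * W 0 j + (-1) ^ (i + j) * W i j =
     (-1) ^ (i + j) * (wedge_list ((ys ! i + ys ! j) # ys ! 0 # Rr) zs
        - wedge_list (ys ! i # (ys ! 0 + ys ! j) # Rr) zs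
        - wedge_list (ys ! j # (ys ! 0 + ys ! i) # Rr) zs)"
proof -
  have r1: "sel (\<lambda>k. (k \<noteq> 0 \<and> k \<noteq> i) \<and> k \<noteq> j) ys = Rr"
    unfolding Rr_def by (rule arg_cong[of _ _ "\<lambda>P. sel P ys"]) (auto simp: fun_eq_iff)
  have r2: "sel (\<lambda>k. (k \<noteq> 0 \<and> k \<noteq> j) \<and> k \<noteq> i) ys = Rr"
    unfolding Rr_def by (rule arg_cong[of _ _ "\<lambda>P. sel P ys"]) (auto simp: fun_eq_iff)
  have r3: "sel (\<lambda>k. (k \<noteq> i \<and> k \<noteq> j) \<and> k \<noteq> 0) ys = Rr"
    unfolding Rr_def by (rule arg_cong[of _ _ "\<lambda>P. sel P ys"]) (auto simp: fun_eq_iff)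
  have h1: "W 0 i = (-1) ^ (j - 2) * wedge_list ((ys ! 0 + ys ! i) # ys ! j # Rr) zs"
    unfolding W_def remove2_sel
    using sel_move[of "\<lambda>k. k \<noteq> 0 \<and> k \<noteq> i" j ys "ys ! 0 + ys ! i" zs] ij card_aux(1)[OF ij(1,2)] r1
    by simp
  have h2: "W 0 j = (-1) ^ (i - 1) * wedge_list ((ys ! 0 + ys ! j) # ys ! i # Rr) zs"
    unfolding W_def remove2_sel
    using sel_move[of "\<lambda>k. k \<noteq> 0 \<and> k \<noteq> j" i ys "ys ! 0 + ys ! j" zs] ij card_aux(2)[OF ij(1,2)] r2
    by simp
  have h3: "W i j = wedge_list ((ys ! i + ys ! j) # ys ! 0 # Rr) zs"
    unfolding W_def remove2_sel
    using sel_move[of "\<lambda>k. k \<noteq> i \<and> k \<noteq> j" 0 ys "ys ! i + ys ! j" zs] ij r3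
    by (cases ys) auto
  have s1: "wedge_list (ys ! i # (ys ! 0 + ys ! j) # Rr) zs = - wedge_list ((ys ! 0 + ys ! j) # ys ! i # Rr) zs"
    by (rule wl_swap)
  have s2: "wedge_list (ys ! j # (ys ! 0 + ys ! i) # Rr) zs = - wedge_list ((ys ! 0 + ys ! i) # ys ! j # Rr) zs"
    by (rule wl_swap)
  obtain i' where i': "i = Suc i'" using ij by (cases i) auto
  obtain j' where j': "j = Suc (Suc j')" using ij by (cases j; cases "j - 1") auto
  define A where "A = wedge_list ((ys ! 0 + ys ! i) # ys ! j # Rr) zs"
  define Bv where "Bv = wedge_list ((ys ! 0 + ys ! j) # ys ! i # Rr) zs"
  define C where "C = wedge_list ((ys ! i + ys ! j) # ys ! 0 # Rr) zs"
  have e: "(-1::rat) ^ i * ((-1) ^ (j - 2) * A) - (-1) ^ j * ((-1) ^ (i - 1) * Bv) + (-1) ^ (i + j) * C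
      = (-1) ^ (i + j) * (C - (- Bv) - (- A))"
    unfolding i' j' by (simp add: algebra_simps power_add)
  show ?thesis unfolding h1 h2 h3 s1 s2 using e by (simp add: A_def Bv_def C_def)
qed



lemma B_sum_list:
  fixes B :: "'a::ab_group_add \<Rightarrow> 'a \<Rightarrow> int"
  assumes bil_right: "\<And>x y w. B w (x + y) = B w x + B w y"
  shows "B w (sum_list xs) = (\<Sum>k<length xs. B w (xs ! k))"
proof -
  have B0: "B w 0 = 0" using bil_right[of w 0 0] by simp
  have "B w (sum_list xs) = sum_list (map (B w) xs)"
    by (induction xs) (simp_all add: B0 bil_right)
  also have "\<dots> = (\<Sum>k<length xs. B w (xs ! k))"
    by (simp add: sum_list_sum_nth atLeast0LessThan)
  finally show ?thesis .
qed

lemma B_anti: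
  fixes B :: "'a::ab_group_add \<Rightarrow> 'a \<Rightarrow> int"
  assumes bil_left: "\<And>x y w. B (x + y) w = B x w + B y w"
    and bil_right: "\<And>x y w. B w (x + y) = B w x + B w y"
    and alt: "\<And>x. B x x = 0"
  shows "B x y = - B y x"
proof -
  have "0 = B (x + y) (x + y)" using alt by simp
  also have "\<dots> = B x x + B x y + (B y x + B y y)" by (simp add: bil_left bil_right)
  finally show ?thesis using alt by simp
qed

lemma bd_J:
  fixes B :: "'a::ab_group_add \<Rightarrow> 'a \<Rightarrow> int"
  assumes bil_left: "\<And>x y w. B (x + y) w = B x w + B y w"
    and bil_right: "\<And>x y w. B w (x + y) = B w x + B w y"
    and alt: "\<And>x. B x x = 0"
    and z_ker: "\<And>y. B z y = 0"
    and J: "Jprop J"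
    and sz: "sum_list ys = z"
  shows "bd_basis B ys \<in> J"
proof -
  define n where "n = length ys"
  define a where "a i j = (of_int (B (ys ! i) (ys ! j)) :: rat)" for i j
  define Rr where "Rr i j = sel (\<lambda>k. k \<noteq> 0 \<and> k \<noteq> i \<and> k \<noteq> j) ys" for i j
  define G where "G i j = (\<lambda>zs. wedge_list ((ys ! i + ys ! j) # ys ! 0 # Rr i j) zs
        - wedge_list (ys ! i # (ys ! 0 + ys ! j) # Rr i j) zs
        - wedge_list (ys ! j # (ys ! 0 + ys ! i) # Rr i j) zs)" for i j
  have anti: "a i j = - a j i" for i j
    unfolding a_def using B_anti[of B, OF bil_left bil_right alt, of "ys ! i" "ys ! j"] by simp
  have row: "(\<Sum>k<n. a m k) = 0" if "m < n" for m
  proof -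
    have "(\<Sum>k<n. a m k) = of_int (B (ys ! m) (sum_list ys))"
      unfolding a_def n_def B_sum_list[of B, OF bil_right] by simp
    also have "\<dots> = 0" using sz z_ker[of "ys ! m"] B_anti[of B, OF bil_left bil_right alt, of "ys ! m" z] by simp
    finally show ?thesis .
  qed
  have eq: "bd_basis B ys = (\<lambda>zs. \<Sum>i<n. \<Sum>j\<in>{i<..<n}. if i = 0 then 0 else a i j * ((-1) ^ (i + j) * G i j zs))"
  proof
    fix zs
    define W where "W i j = wedge_list ((ys ! i + ys ! j) # remove2 i j ys) zs" for i j
    have "bd_basis B ys zs = (\<Sum>i<n. \<Sum>j\<in>{i<..<n}. (-1) ^ (i + j) * a i j * W i j)"
      unfolding bd_basis_def a_def W_def n_def by (simp add: wl_Cons)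
    also have "\<dots> = (\<Sum>i<n. \<Sum>j\<in>{i<..<n}. if i = 0 then 0 else
        a i j * ((-1) ^ i * W 0 i - (-1) ^ j * W 0 j + (-1) ^ (i + j) * W i j))"
      by (rule AS[OF anti row])
    also have "\<dots> = (\<Sum>i<n. \<Sum>j\<in>{i<..<n}. if i = 0 then 0 else a i j * ((-1) ^ (i + j) * G i j zs))"
    proof (intro sum.cong refl)
      fix i j assume i: "i \<in> {..<n}" and j: "j \<in> {i<..<n}"
      show "(if i = 0 then 0 else a i j * ((-1) ^ i * W 0 i - (-1) ^ j * W 0 j + (-1) ^ (i + j) * W i j))
          = (if i = 0 then 0 else a i j * ((-1) ^ (i + j) * G i j zs))"
      proof (cases "i = 0")
        case False
        then show ?thesis using E_identity[of i j ys zs] i j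
          unfolding W_def G_def Rr_def n_def by simp
      qed simp
    qed
    finally show "bd_basis B ys zs = (\<Sum>i<n. \<Sum>j\<in>{i<..<n}. if i = 0 then 0 else a i j * ((-1) ^ (i + j) * G i j zs))" .
  qed
  have GJ: "G i j \<in> qspan J" for i j
  proof -
    have "G i j \<in> J" unfolding G_def using rel_J[OF J, of "ys ! i" "ys ! j" "ys ! 0" "Rr i j"]
      by (simp add: add.commute)
    then show ?thesis using J by (simp add: Jprop_def)
  qed
  have "(\<lambda>zs. \<Sum>i<n. \<Sum>j\<in>{i<..<n}. if i = 0 then 0 else a i j * ((-1) ^ (i + j) * G i j zs)) \<in> qspan J"
  proof (intro qspan_sum)
    fix i j
    show "(\<lambda>zs. if i = 0 then 0 else a i j * ((-1) ^ (i + j) * G i j zs)) \<in> qspan J"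
    proof (cases "i = 0")
      case True then show ?thesis using qspan.zero by simp
    next
      case False
      have "(\<lambda>zs. (a i j * (-1) ^ (i + j)) * G i j zs) \<in> qspan J" by (rule qspan_scale[OF GJ])
      then show ?thesis using False by (simp add: mult.assoc)
    qed
  qed
  then show ?thesis using J eq by (simp add: Jprop_def)
qed



lemma bd_Cw:
  fixes B :: "'a::ab_group_add \<Rightarrow> 'a \<Rightarrow> int"
  assumes "length ys = p" "sum_list ys = z"
  shows "bd_basis B ys \<in> Cw (p - 1) z"
  unfolding bd_basis_def Cw_def
proof (intro qspan_sum)
  fix i j assume i: "i \<in> {..<length ys}" and j: "j \<in> {i<..<length ys}"
  have "wedge (gen (ys ! i + ys ! j)) (wedge_list (remove2 i j ys)) \<in>
      {wedge_list us | us. length us = p - 1 \<and> sum_list us = z}"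
  proof -
    have "wedge (gen (ys ! i + ys ! j)) (wedge_list (remove2 i j ys)) = wedge_list ((ys ! i + ys ! j) # remove2 i j ys)"
      by (simp add: wl_Cons)
    moreover have "length ((ys ! i + ys ! j) # remove2 i j ys) = p - 1"
      "sum_list ((ys ! i + ys ! j) # remove2 i j ys) = z"
      using remove2_facts[of i j ys] i j assms by auto
    ultimately show ?thesis by blast
  qed
  then have "(\<lambda>zs. ((-1) ^ (i + j) * of_int (B (ys ! i) (ys ! j))) *
      wedge (gen (ys ! i + ys ! j)) (wedge_list (remove2 i j ys)) zs) \<in> qspan {wedge_list us | us. length us = p - 1 \<and> sum_list us = z}"
    by (intro qspan_scale qspan_gen)
  then show "(\<lambda>zs. (-1) ^ (i + j) * of_int (B (ys ! i) (ys ! j)) *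
      wedge (gen (ys ! i + ys ! j)) (wedge_list (remove2 i j ys)) zs) \<in> qspan {wedge_list us | us. length us = p - 1 \<and> sum_list us = z}"
    by simp
qed

lemma supp_sum:
  assumes "\<omega> \<in> Cw p z" "\<omega> ys \<noteq> 0"
  shows "sum_list ys = z"
proof -
  obtain us where us: "length us = p" "sum_list us = z" "wedge_list us ys \<noteq> 0"
    using qspan_supp[OF assms[unfolded Cw_def]] by blast
  then have "F us ys \<noteq> 0" by (simp add: wl_F)
  then obtain \<sigma> where s: "\<sigma> permutes {0..<length ys}" "Defs.permute_list ys \<sigma> = us"
  proof -
    have "(\<Sum>\<sigma>\<in>{\<sigma>. \<sigma> permutes {0..<length ys}}. of_int (sign \<sigma>) * (if Defs.permute_list ys \<sigma> = us then 1 else 0 :: rat)) \<noteq> 0"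
      using \<open>F us ys \<noteq> 0\<close> unfolding F_def by (metis (no_types, lifting))
    then obtain \<sigma> where "\<sigma> \<in> {\<sigma>. \<sigma> permutes {0..<length ys}}"
      "of_int (sign \<sigma>) * (if Defs.permute_list ys \<sigma> = us then 1 else 0 :: rat) \<noteq> 0"
      by (meson sum.not_neutral_contains_not_neutral)
    then show ?thesis using that by (auto split: if_splits)
  qed
  have "mset (Permutations.permute_list \<sigma> ys) = mset ys"
    by (rule mset_permute_list) (use s in \<open>simp add: atLeast0LessThan\<close>)
  then have "mset us = mset ys" using s by (simp add: pl_eq)
  then have "sum_list us = sum_list ys" by (metis sum_mset_sum_list)
  then show ?thesis using us by simp
qed

theorem proposition3p1:
  fixes B :: "'a::ab_group_add \<Rightarrow> 'a \<Rightarrow> int" and z :: 'a and p :: nat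
  assumes bil_left: "\<And>x y w. B (x + y) w = B x w + B y w"
    and bil_right: "\<And>x y w. B w (x + y) = B w x + B w y"
    and alt: "\<And>x. B x x = 0"
    and z_ker: "\<And>y. B z y = 0"
    and p: "p \<ge> 2"
  shows "\<forall>\<omega> \<in> Cw p z. boundary B p \<omega> \<in> Ihat \<inter> Cw (p - 1) z"
proof
  fix \<omega> assume \<omega>: "\<omega> \<in> Cw p z"
  define Sup where "Sup = {ys. length ys = p \<and> \<omega> ys \<noteq> 0}"
  have bd: "boundary B p \<omega> = (\<lambda>zs. \<Sum>ys\<in>Sup. (\<omega> ys / fact p) * bd_basis B ys zs)"
    by (simp add: boundary_def Sup_def)
  have s: "sum_list ys = z" "length ys = p" if "ys \<in> Sup" for ys
    using that supp_sum[OF \<omega>] by (auto simp: Sup_def)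
  have "boundary B p \<omega> \<in> Cw (p - 1) z"
    unfolding bd unfolding Cw_def
  proof (intro qspan_sum qspan_scale)
    fix ys assume "ys \<in> Sup"
    then show "bd_basis B ys \<in> qspan {wedge_list us |us. length us = p - 1 \<and> sum_list us = z}"
      using bd_Cw[OF s(2) s(1), of ys B] unfolding Cw_def by simp
  qed
  moreover have "boundary B p \<omega> \<in> Ihat"
    unfolding Ihat_def
  proof (intro InterI)
    fix J :: "('a list \<Rightarrow> rat) set" assume "J \<in> {J. J \<subseteq> ext_alg \<and> qspan J = J \<and> ideal_gens \<subseteq> J \<and>
              (\<forall>a\<in>ext_alg. \<forall>j\<in>J. wedge a j \<in> J \<and> wedge j a \<in> J)}"
    then have J: "Jprop J" by (simp add: Jprop_def)
    have "boundary B p \<omega> \<in> qspan J"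
      unfolding bd
    proof (intro qspan_sum qspan_scale)
      fix ys assume "ys \<in> Sup"
      then have "bd_basis B ys \<in> J" using bd_J[OF bil_left bil_right alt z_ker J s(1)] by simp
      then show "bd_basis B ys \<in> qspan J" using J by (simp add: Jprop_def)
    qed
    then show "boundary B p \<omega> \<in> J" using J by (simp add: Jprop_def)
  qed
  ultimately show "boundary B p \<omega> \<in> Ihat \<inter> Cw (p - 1) z" by simp
qed

end
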